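(* Let $N\ge 2$, $T\ge1$, $\alpha\in(0,1)$, $\eta>0$, and define the Tsallis entropy $S_\alpha(p)=\frac{1}{1-\alpha}\big(1-\sum_{i=1}^N p_i^\alpha\big)$ for $p\in\Delta_N$ and $\tilde\Phi(G)=\max_{p\in\Delta_N}\{\langle p,G\rangle-\eta S_\alpha(p)\}$. Then for every loss sequence $g_1,\dots,g_T\in[-1,0]^N$ fixed in advance, the algorithm GBPA$(\tilde\Phi)$ has expected regret \[\mathbb{E}\,\mathrm{Regret}_T\le \eta\,\frac{N^{1-\alpha}-1}{1-\alpha}+\frac{N^\alpha T}{2\eta\alpha}.\]
   Context: $\Delta_N$ is the probability simplex in $\mathbb{R}^N$, $e_i$ the standard basis vector. Algorithm GBPA$(\tilde\Phi)$: set $\hat G_0=0$; for $t=1,\dots,T$: sample arm $i_t$ according to $p_t=\nabla\tilde\Phi(\hat G_{t-1})$; incur and observe only $g_{t,i_t}$; set $\hat G_t=\hat G_{t-1}+\frac{g_{t,i_t}}{p_{t,i_t}}e_{i_t}$. Regret is $\mathrm{Regret}_T=\max_{i}\sum_{t=1}^T(g_{t,i}-g_{t,i_t})$ and the expectation is over the algorithm's sampling. *)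

theory Defs
  imports "HOL-Analysis.Analysis"
begin

definition prob_simplex :: "(real ^ 'n::finite) set" where
  "prob_simplex = {p. (\<forall>i. 0 \<le> p $ i) \<and> (\<Sum>i\<in>UNIV. p $ i) = 1}"

definition tsallis :: "real \<Rightarrow> real ^ 'n::finite \<Rightarrow> real" where
  "tsallis \<alpha> p = (1 - (\<Sum>i\<in>UNIV. (p $ i) powr \<alpha>)) / (1 - \<alpha>)"

definition PhiT :: "real \<Rightarrow> real \<Rightarrow> real ^ 'n::finite \<Rightarrow> real" where
  "PhiT \<eta> \<alpha> G = (SUP p\<in>prob_simplex. inner p G - \<eta> * tsallis \<alpha> p)"

definition grad :: "(real ^ 'n::finite \<Rightarrow> real) \<Rightarrow> real ^ 'n \<Rightarrow> real ^ 'n" where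
  "grad f x = (SOME D. GDERIV f x :> D)"

text \<open>GBPA run along a fixed history h of sampled arms (h t = arm sampled in round t, t \<ge> 1):
  estimated cumulative gain vector \<open>Ghat t\<close> after t rounds.\<close>
fun Ghat :: "(real ^ 'n::finite \<Rightarrow> real) \<Rightarrow> (nat \<Rightarrow> real ^ 'n) \<Rightarrow> (nat \<Rightarrow> 'n) \<Rightarrow> nat \<Rightarrow> real ^ 'n" where
  "Ghat Phi g h 0 = 0"
| "Ghat Phi g h (Suc t) =
     Ghat Phi g h t
     + (g (Suc t) $ h (Suc t) / grad Phi (Ghat Phi g h t) $ h (Suc t)) *\<^sub>R axis (h (Suc t)) 1"

definition pdist :: "(real ^ 'n::finite \<Rightarrow> real) \<Rightarrow> (nat \<Rightarrow> real ^ 'n) \<Rightarrow> (nat \<Rightarrow> 'n) \<Rightarrow> nat \<Rightarrow> real ^ 'n" where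
  "pdist Phi g h t = grad Phi (Ghat Phi g h (t - 1))"

definition hist_prob :: "(real ^ 'n::finite \<Rightarrow> real) \<Rightarrow> (nat \<Rightarrow> real ^ 'n) \<Rightarrow> nat \<Rightarrow> (nat \<Rightarrow> 'n) \<Rightarrow> real" where
  "hist_prob Phi g T h = (\<Prod>t=1..T. pdist Phi g h t $ h t)"

definition regret :: "(nat \<Rightarrow> real ^ 'n::finite) \<Rightarrow> nat \<Rightarrow> (nat \<Rightarrow> 'n) \<Rightarrow> real" where
  "regret g T h = Max (range (\<lambda>i. \<Sum>t=1..T. g t $ i - g t $ h t))"

definition expected_regret :: "(real ^ 'n::finite \<Rightarrow> real) \<Rightarrow> (nat \<Rightarrow> real ^ 'n) \<Rightarrow> nat \<Rightarrow> real" where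
  "expected_regret Phi g T =
     (\<Sum>h\<in>PiE {1..T} (\<lambda>_. UNIV). hist_prob Phi g T h * regret g T h)"

end

theory Submission
  imports Defs
begin


lemma tangent_powr:
  fixes x p a :: real
  assumes "0 \<le> x" "0 < p" "0 < a" "a < 1"
  shows "x powr a \<le> p powr a + a * p powr (a - 1) * (x - p)"
proof (cases "x = 0")
  case True
  have "p powr (a-1) * p = p powr a" using assms by (simp add: powr_diff)
  then show ?thesis using True assms by (simp add: algebra_simps)
next
  case False
  hence x: "x > 0" using assms by simp
  have "x powr a * p powr (1 - a) \<le> a * x + (1 - a) * p"
    using Youngs_inequality_0[of a "1-a" x p] assms x by simp
  hence "x powr a * p powr (1 - a) * p powr (a - 1) \<le> (a * x + (1 - a) * p) * p powr (a - 1)"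
    by (rule mult_right_mono) simp
  moreover have "p powr (1 - a) * p powr (a - 1) = 1" using assms by (simp flip: powr_add)
  moreover have "p powr (a-1) * p = p powr a" using assms by (simp add: powr_diff)
  ultimately show ?thesis by (simp add: algebra_simps)
qed

lemma convex_neg_tangent:
  fixes t g :: real
  assumes "0 < t" "0 < g"
  shows "1 + g * (1 - t) \<le> t powr (-g)"
proof -
  have "ln t \<le> t - 1" by (rule ln_le_minus_one[OF assms(1)])
  hence "g * ln t \<le> g * (t - 1)" using assms by (intro mult_left_mono) auto
  hence "1 + g * (1 - t) \<le> 1 + (- g * ln t)" by (simp add: algebra_simps)
  also have "\<dots> \<le> exp (- g * ln t)" by (rule exp_ge_add_one_self)
  also have "\<dots> = t powr (-g)" using assms by (simp add: powr_def)
  finally show ?thesis .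
qed

locale tsal = fixes \<eta> \<alpha> :: real assumes eta: "\<eta> > 0" and a0: "0 < \<alpha>" and a1: "\<alpha> < 1"
begin

definition c where "c = \<eta> * \<alpha> / (1 - \<alpha>)"
definition bet where "bet = 1 / (1 - \<alpha>)"
definition P :: "real \<Rightarrow> real^'n::finite \<Rightarrow> 'n \<Rightarrow> real" where
  "P l G j = (c / (l - G$j)) powr bet"
definition valid :: "real \<Rightarrow> real^'n::finite \<Rightarrow> bool" where
  "valid l G \<longleftrightarrow> (\<forall>j. G$j < l) \<and> (\<Sum>j\<in>UNIV. P l G j) = 1"
definition lam :: "real^'n::finite \<Rightarrow> real" where "lam G = (SOME l. valid l G)"
definition pm :: "real^'n::finite \<Rightarrow> real^'n" where "pm G = (\<chi> j. P (lam G) G j)"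

lemma c_pos: "c > 0" using eta a0 a1 unfolding c_def by simp
lemma bet_pos: "bet > 0" using a1 unfolding bet_def by simp

lemma P_pos: "G$j < l \<Longrightarrow> P l G j > 0"
  unfolding P_def using c_pos by simp

lemma fun_strict: "0 < y \<Longrightarrow> y < x \<Longrightarrow> (c / x) powr bet < (c / y) powr bet"
  by (rule powr_less_mono2) (use bet_pos c_pos in \<open>auto intro: divide_strict_left_mono\<close>)

lemma compare:
  fixes G1 G2 :: "real^'n::finite"
  assumes v1: "valid l1 G1" and v2: "valid l2 G2" and d: "\<And>j. G1$j - G2$j \<le> d"
  shows "l1 - l2 \<le> d"
proof (rule ccontr)
  assume "\<not> l1 - l2 \<le> d"
  hence "\<And>j. P l1 G1 j < P l2 G2 j"
    unfolding P_def using v1 v2 d[of j] unfolding valid_def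
    by (intro fun_strict) (smt (verit) d)+
  hence "(\<Sum>j\<in>UNIV. P l1 G1 j) < (\<Sum>j\<in>UNIV. P l2 G2 j)"
    by (intro sum_strict_mono) auto
  thus False using v1 v2 unfolding valid_def by simp
qed

lemma N_pow_inv: "(real CARD('n::finite) powr (\<alpha> - 1)) powr bet = 1 / real CARD('n)"
proof -
  have "(\<alpha> - 1) * bet = -1" using a1 unfolding bet_def by (simp add: field_simps)
  thus ?thesis by (simp add: powr_powr powr_minus divide_inverse)
qed

lemma exists_valid: "\<exists>l. valid l (G::real^'n::finite)"
proof -
  define M where "M = Max (range (\<lambda>j. G$j))"
  have "M \<in> range (\<lambda>j. G$j)" unfolding M_def by (intro Max_in) auto
  then obtain k where k: "G$k = M" by auto
  have GM: "G$j \<le> M" for j unfolding M_def by (intro Max_ge) auto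
  define N where "N = real CARD('n)"
  have N1: "N \<ge> 1" unfolding N_def by (simp add: Suc_le_eq)
  have Npow: "N powr (1 - \<alpha>) \<ge> 1" using N1 a1 by (simp add: ge_one_powr_ge_zero)
  define f where "f l = (\<Sum>j\<in>UNIV. P l G j)" for l
  define l1 where "l1 = M + c"
  define l2 where "l2 = M + c * N powr (1 - \<alpha>)"
  have l12: "l1 \<le> l2" unfolding l1_def l2_def using c_pos Npow by simp
  have "f l1 \<ge> 1"
  proof -
    have "P l1 G k = 1" unfolding P_def l1_def k using c_pos by simp
    moreover have "P l1 G k \<le> f l1" unfolding f_def
      by (rule member_le_sum) (auto simp: P_def)
    ultimately show ?thesis by simp
  qed
  moreover have "f l2 \<le> 1"
  proof -
    have "P l2 G j \<le> 1 / N" for j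
    proof -
      have pos: "0 < c * N powr (1 - \<alpha>)" using c_pos N1 by simp
      have "c / (l2 - G$j) \<le> c / (c * N powr (1 - \<alpha>))"
        using GM[of j] pos c_pos unfolding l2_def by (intro divide_left_mono) auto
      also have "\<dots> = N powr (\<alpha> - 1)" using c_pos N1
        by (simp add: powr_minus_divide[symmetric] powr_minus)
      finally have "(c / (l2 - G$j)) powr bet \<le> (N powr (\<alpha> - 1)) powr bet"
        using GM[of j] pos c_pos bet_pos unfolding l2_def by (intro powr_mono2) auto
      thus ?thesis unfolding P_def N_def using N_pow_inv[where 'n='n] by simp
    qed
    hence "f l2 \<le> real CARD('n) * (1 / N)" unfolding f_def
      using sum_bounded_above[of UNIV "P l2 G" "1/N"] by simp
    thus ?thesis unfolding N_def by simp
  qed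
  moreover have "isCont f x" if "l1 \<le> x" for x
  proof -
    have "G$j < x" for j using GM[of j] that c_pos unfolding l1_def by simp
    thus ?thesis unfolding f_def P_def using c_pos
      by (intro continuous_intros) auto
  qed
  ultimately obtain l where l: "l1 \<le> l" "l \<le> l2" "f l = 1"
    using IVT2[of f l2 1 l1] l12 by auto
  have "G$j < l" for j using GM[of j] l c_pos unfolding l1_def by simp
  with l show ?thesis unfolding valid_def f_def by auto
qed

lemma lam_valid: "valid (lam G) G"
  unfolding lam_def using exists_valid by (rule someI_ex)

lemma lam_unique: "valid l G \<Longrightarrow> lam G = l"
  using compare[of "lam G" G l G 0] compare[of l G "lam G" G 0] lam_valid[of G] by force

lemma lam_gt: "G$j < lam G" using lam_valid unfolding valid_def by auto

lemma pm_pos: "pm G $ j > 0" unfolding pm_def using P_pos[of G j "lam G"] lam_gt[of G j] by simp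

lemma pm_sum: "(\<Sum>j\<in>UNIV. pm G $ j) = 1" unfolding pm_def using lam_valid[of G] unfolding valid_def by simp

lemma pm_simplex: "pm G \<in> prob_simplex"
  unfolding prob_simplex_def using pm_pos pm_sum by (auto intro: less_imp_le)

lemma pm_pow: "pm G $ j powr (\<alpha> - 1) = (lam G - G$j) / c"
proof -
  have "bet * (\<alpha> - 1) = -1" using a1 unfolding bet_def by (simp add: field_simps)
  moreover have "0 < c / (lam G - G$j)" using c_pos lam_gt[of G j] by simp
  ultimately show ?thesis unfolding pm_def P_def using c_pos
    by (simp add: powr_powr powr_minus divide_inverse)
qed

definition F :: "real^'n::finite \<Rightarrow> real^'n \<Rightarrow> real" where
  "F G q = inner q G - \<eta> * tsallis \<alpha> q"

lemma F_expand: "F G q = (\<Sum>j\<in>UNIV. q$j * G$j + \<eta> / (1 - \<alpha>) * q$j powr \<alpha>) - \<eta> / (1 - \<alpha>)"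
proof -
  have "F G q = (\<Sum>j\<in>UNIV. q$j * G$j) + \<eta> / (1 - \<alpha>) * (\<Sum>j\<in>UNIV. q$j powr \<alpha>) - \<eta> / (1 - \<alpha>)"
  proof -
    have "\<eta> * ((1 - (\<Sum>j\<in>UNIV. q$j powr \<alpha>)) / (1 - \<alpha>)) = \<eta> / (1 - \<alpha>) - \<eta> / (1 - \<alpha>) * (\<Sum>j\<in>UNIV. q$j powr \<alpha>)"
      by (simp add: diff_divide_distrib right_diff_distrib)
    thus ?thesis unfolding F_def tsallis_def inner_vec_def by (simp add: mult.commute)
  qed
  thus ?thesis by (simp add: sum.distrib sum_distrib_left)
qed

lemma F_opt:
  assumes q: "q \<in> prob_simplex"
  shows "F G q \<le> F G (pm G)"
proof -
  define p where "p = pm G"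
  define l where "l = lam G"
  define e where "e = \<eta> / (1 - \<alpha>)"
  have e: "e > 0" using eta a1 unfolding e_def by simp
  have ec: "e * \<alpha> = c" unfolding e_def c_def by simp
  have q0: "0 \<le> q$j" for j using q unfolding prob_simplex_def by auto
  have qs: "(\<Sum>j\<in>UNIV. q$j) = 1" using q unfolding prob_simplex_def by auto
  have step: "q$j * G$j + e * q$j powr \<alpha> \<le> p$j * G$j + e * p$j powr \<alpha> + l * (q$j - p$j)" for j
  proof -
    have "q$j powr \<alpha> \<le> p$j powr \<alpha> + \<alpha> * p$j powr (\<alpha> - 1) * (q$j - p$j)"
      using tangent_powr[of "q$j" "p$j" \<alpha>] q0 pm_pos a0 a1 unfolding p_def by auto
    hence "e * q$j powr \<alpha> \<le> e * (p$j powr \<alpha> + \<alpha> * p$j powr (\<alpha> - 1) * (q$j - p$j))"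
      using e by simp
    also have "\<dots> = e * p$j powr \<alpha> + (e * \<alpha> * p$j powr (\<alpha> - 1)) * (q$j - p$j)"
      by (simp add: algebra_simps)
    also have "e * \<alpha> * p$j powr (\<alpha> - 1) = l - G$j"
      using pm_pow[of G j] c_pos unfolding p_def l_def ec by simp
    finally have "e * q$j powr \<alpha> \<le> e * p$j powr \<alpha> + (l - G$j) * (q$j - p$j)" .
    thus ?thesis by (simp add: algebra_simps)
  qed
  have "(\<Sum>j\<in>UNIV. q$j * G$j + e * q$j powr \<alpha>) \<le> (\<Sum>j\<in>UNIV. p$j * G$j + e * p$j powr \<alpha> + l * (q$j - p$j))"
    by (intro sum_mono step)
  also have "\<dots> = (\<Sum>j\<in>UNIV. p$j * G$j + e * p$j powr \<alpha>)"
    using qs pm_sum[of G] unfolding p_def by (simp add: sum.distrib sum_subtractf flip: sum_distrib_left)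
  finally show ?thesis unfolding F_expand e_def p_def by simp
qed

lemma Phi_eq: "PhiT \<eta> \<alpha> G = F G (pm G)"
  unfolding PhiT_def F_def[symmetric]
  by (rule cSup_eq_maximum) (use pm_simplex F_opt in auto)

lemma Phi_ge: "q \<in> prob_simplex \<Longrightarrow> F G q \<le> PhiT \<eta> \<alpha> G"
  using F_opt[of q G] Phi_eq[of G] by simp

lemma F_shift: "F G' q = F G q + inner q (G' - G)"
  unfolding F_def by (simp add: inner_diff_right)

lemma sand_lo: "inner (pm G) (G' - G) \<le> PhiT \<eta> \<alpha> G' - PhiT \<eta> \<alpha> G"
  using Phi_ge[OF pm_simplex, of G' G] F_shift[of G' "pm G" G] Phi_eq[of G] by simp

lemma sand_hi: "PhiT \<eta> \<alpha> G' - PhiT \<eta> \<alpha> G \<le> inner (pm G') (G' - G)"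
  using sand_lo[of G' G] by (simp add: inner_diff_right)

lemma lam_lip: "\<bar>lam G' - lam G\<bar> \<le> norm (G' - G)"
proof -
  have "lam G' - lam G \<le> norm (G' - G)"
    by (rule compare[OF lam_valid lam_valid])
      (metis component_le_norm_cart abs_le_D1 vector_minus_component)
  moreover have "lam G - lam G' \<le> norm (G' - G)"
    by (rule compare[OF lam_valid lam_valid])
      (metis component_le_norm_cart abs_le_D1 vector_minus_component norm_minus_commute)
  ultimately show ?thesis by linarith
qed

lemma lam_tendsto: "(lam \<longlongrightarrow> lam G) (at G)"
  by (rule metric_tendsto_imp_tendsto[OF tendsto_ident_at])
    (auto simp: dist_norm intro!: always_eventually lam_lip)

lemma pm_tendsto: "(pm \<longlongrightarrow> pm G) (at G)"
proof -
  have "((\<lambda>y. \<chi> j. P (lam y) y j) \<longlongrightarrow> (\<chi> j. P (lam G) G j)) (at G)"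
  proof (rule tendsto_vec_lambda)
    fix j
    have "0 < lam G - G$j" using lam_gt[of G j] by simp
    thus "((\<lambda>y. P (lam y) y j) \<longlongrightarrow> P (lam G) G j) (at G)"
      unfolding P_def using c_pos
      by (intro tendsto_intros lam_tendsto tendsto_ident_at) auto
  qed
  thus ?thesis unfolding pm_def by simp
qed

lemma Phi_deriv: "(PhiT \<eta> \<alpha> has_derivative (\<lambda>h. inner h (pm G))) (at G)"
  unfolding has_derivative_iff_norm
proof
  show "bounded_linear (\<lambda>h. inner h (pm G))" by (rule bounded_linear_inner_left)
  show "((\<lambda>y. norm (PhiT \<eta> \<alpha> y - PhiT \<eta> \<alpha> G - inner (y - G) (pm G)) / norm (y - G)) \<longlongrightarrow> 0) (at G)"
  proof (rule metric_tendsto_imp_tendsto[OF pm_tendsto[of G]])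
    show "\<forall>\<^sub>F y in at G. dist (norm (PhiT \<eta> \<alpha> y - PhiT \<eta> \<alpha> G - inner (y - G) (pm G)) / norm (y - G)) 0 \<le> dist (pm y) (pm G)"
    proof (rule always_eventually, rule allI)
      fix y :: "real^'a"
      have lo: "0 \<le> PhiT \<eta> \<alpha> y - PhiT \<eta> \<alpha> G - inner (y - G) (pm G)"
        using sand_lo[of G y] by (simp add: inner_commute)
      have "PhiT \<eta> \<alpha> y - PhiT \<eta> \<alpha> G - inner (y - G) (pm G) \<le> inner (pm y - pm G) (y - G)"
        using sand_hi[of y G] by (simp add: inner_commute inner_diff_left inner_diff_right)
      also have "\<dots> \<le> norm (pm y - pm G) * norm (y - G)" by (rule norm_cauchy_schwarz)
      finally have hi: "PhiT \<eta> \<alpha> y - PhiT \<eta> \<alpha> G - inner (y - G) (pm G) \<le> norm (pm y - pm G) * norm (y - G)" .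
      show "dist (norm (PhiT \<eta> \<alpha> y - PhiT \<eta> \<alpha> G - inner (y - G) (pm G)) / norm (y - G)) 0 \<le> dist (pm y) (pm G)"
      proof (cases "y = G")
        case True thus ?thesis by simp
      next
        case False
        hence "norm (y - G) > 0" by simp
        thus ?thesis using lo hi by (simp add: dist_norm divide_le_eq)
      qed
    qed
  qed
qed

lemma grad_eq: "grad (PhiT \<eta> \<alpha>) G = pm G"
proof -
  have g: "GDERIV (PhiT \<eta> \<alpha>) G :> pm G" unfolding gderiv_def by (rule Phi_deriv)
  have "D = pm G" if "GDERIV (PhiT \<eta> \<alpha>) G :> D" for D
  proof -
    have "(\<lambda>h. inner h D) = (\<lambda>h. inner h (pm G))"
      using has_derivative_unique that g unfolding gderiv_def by blast
    hence "inner (D - pm G) D = inner (D - pm G) (pm G)" by metis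
    hence "inner (D - pm G) (D - pm G) = 0" by (simp add: inner_diff_right)
    thus ?thesis by simp
  qed
  thus ?thesis unfolding grad_def using g by blast
qed

lemma q_drop:
  assumes v: "0 \<le> v"
  shows "pm G $ j - pm (G - v *\<^sub>R axis j 1) $ j \<le> v * (pm G $ j) powr (2 - \<alpha>) / (\<eta> * \<alpha>)"
proof -
  define G' where "G' = G - v *\<^sub>R axis j 1"
  define q0 where "q0 = pm G $ j"
  define q where "q = pm G' $ j"
  have q0p: "q0 > 0" unfolding q0_def by (rule pm_pos)
  have qp: "q > 0" unfolding q_def by (rule pm_pos)
  have ll: "lam G' - lam G \<le> 0"
    by (rule compare[OF lam_valid lam_valid]) (use v in \<open>auto simp: G'_def axis_def\<close>)
  have Gj: "G'$j = G$j - v" unfolding G'_def by (simp add: axis_def)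
  have A0: "q0 powr (\<alpha> - 1) = (lam G - G$j) / c" unfolding q0_def by (rule pm_pow)
  have A1: "q powr (\<alpha> - 1) = (lam G' - G$j + v) / c" unfolding q_def using pm_pow[of G' j] Gj by simp
  have diff: "q powr (\<alpha> - 1) - q0 powr (\<alpha> - 1) \<le> v / c"
    using A0 A1 ll c_pos by (simp add: diff_divide_distrib[symmetric] divide_right_mono)
  have RHS: "0 \<le> v * q0 powr (2 - \<alpha>) / (\<eta> * \<alpha>)" using v eta a0 by simp
  show ?thesis
  proof (cases "q0 \<le> q")
    case True thus ?thesis using RHS unfolding q0_def q_def G'_def by simp
  next
    case False
    define t where "t = q / q0"
    have t: "0 < t" using qp q0p unfolding t_def by simp
    have "1 + (1 - \<alpha>) * (1 - t) \<le> t powr (-(1 - \<alpha>))"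
      by (rule convex_neg_tangent) (use t a1 in auto)
    also have "\<dots> = q powr (\<alpha> - 1) / q0 powr (\<alpha> - 1)"
      unfolding t_def using qp q0p by (simp add: powr_divide)
    finally have "q0 powr (\<alpha> - 1) * (1 + (1 - \<alpha>) * (1 - t)) \<le> q powr (\<alpha> - 1)"
      using q0p by (simp add: field_simps)
    hence "q0 powr (\<alpha> - 1) * ((1 - \<alpha>) * (1 - t)) \<le> v / c" using diff by (simp add: algebra_simps)
    moreover have "q0 powr (\<alpha> - 1) * ((1 - \<alpha>) * (1 - t)) = (1 - \<alpha>) * (q0 - q) / q0 powr (2 - \<alpha>)"
    proof -
      have "q0 powr (\<alpha> - 1) = q0 / q0 powr (2 - \<alpha>)"
      proof -
        have "q0 powr (\<alpha> - 1) = q0 powr (1 - (2 - \<alpha>))" by simp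
        also have "\<dots> = q0 powr 1 / q0 powr (2 - \<alpha>)" by (rule powr_diff)
        finally show ?thesis using q0p by simp
      qed
      thus ?thesis unfolding t_def using q0p by (simp add: field_simps)
    qed
    ultimately have "(1 - \<alpha>) * (q0 - q) / q0 powr (2 - \<alpha>) \<le> v / c" by simp
    hence "(1 - \<alpha>) * (q0 - q) \<le> v / c * q0 powr (2 - \<alpha>)"
      using q0p by (simp add: divide_le_eq)
    hence "c * (1 - \<alpha>) * (q0 - q) \<le> v * q0 powr (2 - \<alpha>)"
      using c_pos by (simp add: field_simps)
    moreover have "c * (1 - \<alpha>) = \<eta> * \<alpha>" unfolding c_def using a1 by simp
    ultimately have "\<eta> * \<alpha> * (q0 - q) \<le> v * q0 powr (2 - \<alpha>)" by simp
    hence "q0 - q \<le> v * q0 powr (2 - \<alpha>) / (\<eta> * \<alpha>)"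
      using eta a0 by (simp add: field_simps)
    thus ?thesis unfolding q0_def q_def G'_def .
  qed
qed

lemma path_deriv:
  "((\<lambda>v. PhiT \<eta> \<alpha> (G - v *\<^sub>R axis j 1)) has_real_derivative (- (pm (G - v *\<^sub>R axis j 1) $ j))) (at v)"
proof -
  have d1: "((\<lambda>v. G - v *\<^sub>R axis j 1) has_derivative (\<lambda>x. - (x *\<^sub>R axis j 1))) (at v)"
    by (auto intro!: derivative_eq_intros)
  have "((\<lambda>v. PhiT \<eta> \<alpha> (G - v *\<^sub>R axis j 1)) has_derivative
          (\<lambda>x. inner (- (x *\<^sub>R axis j 1)) (pm (G - v *\<^sub>R axis j 1)))) (at v)"
    using has_derivative_compose[OF d1 Phi_deriv] by simp
  moreover have "(\<lambda>x. inner (- (x *\<^sub>R axis j 1)) (pm (G - v *\<^sub>R axis j 1))) = (*) (- (pm (G - v *\<^sub>R axis j 1) $ j))"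
    by (auto simp: inner_axis')
  ultimately show ?thesis unfolding has_field_derivative_def by simp
qed

lemma diverg:
  assumes u: "0 \<le> u"
  shows "PhiT \<eta> \<alpha> (G - u *\<^sub>R axis j 1) - PhiT \<eta> \<alpha> G + u * pm G $ j
          \<le> (pm G $ j) powr (2 - \<alpha>) / (\<eta> * \<alpha>) * u^2 / 2"
proof -
  define q0 where "q0 = pm G $ j"
  define L where "L = q0 powr (2 - \<alpha>) / (\<eta> * \<alpha>)"
  define r where "r v = PhiT \<eta> \<alpha> (G - v *\<^sub>R axis j 1) + v * q0 - L * v^2 / 2" for v
  have "r u \<le> r 0"
  proof (rule DERIV_nonpos_imp_nonincreasing[OF u])
    fix x assume x: "0 \<le> x" "x \<le> u"
    have "DERIV r x :> (- (pm (G - x *\<^sub>R axis j 1) $ j) + q0 - L * x)"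
      unfolding r_def by (auto intro!: derivative_eq_intros path_deriv)
    moreover have "- (pm (G - x *\<^sub>R axis j 1) $ j) + q0 - L * x \<le> 0"
      using q_drop[OF x(1), of G j] unfolding L_def q0_def by (simp add: field_simps)
    ultimately show "\<exists>y. DERIV r x :> y \<and> y \<le> 0" by blast
  qed
  thus ?thesis unfolding r_def L_def q0_def by (simp add: field_simps)
qed

lemma sum_powr_le:
  fixes q :: "real^'n::finite"
  assumes q: "q \<in> prob_simplex" and a: "0 < a" "a < 1"
  shows "(\<Sum>j\<in>UNIV. q$j powr a) \<le> real CARD('n) powr (1 - a)"
proof -
  define N where "N = real CARD('n)"
  have N: "N > 0" unfolding N_def by simp
  have q0: "0 \<le> q$j" for j using q unfolding prob_simplex_def by auto
  have qs: "(\<Sum>j\<in>UNIV. q$j) = 1" using q unfolding prob_simplex_def by auto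
  have "(\<Sum>j\<in>UNIV. q$j powr a) \<le> (\<Sum>j\<in>UNIV. (1/N) powr a + a * (1/N) powr (a - 1) * (q$j - 1/N))"
    by (intro sum_mono tangent_powr) (use q0 N a in auto)
  also have "\<dots> = N * (1/N) powr a + a * (1/N) powr (a - 1) * ((\<Sum>j\<in>UNIV. q$j) - N * (1/N))"
    unfolding N_def by (simp add: sum.distrib sum_subtractf flip: sum_distrib_left)
  also have "\<dots> = N * (1/N) powr a" using qs N by simp
  also have "\<dots> = N powr (1 - a)" using N by (simp add: powr_divide powr_diff)
  finally show ?thesis unfolding N_def .
qed

lemma step_bound:
  fixes G gg :: "real^'n::finite"
  assumes gg: "\<And>j. -1 \<le> gg$j \<and> gg$j \<le> 0"
  shows "(\<Sum>j\<in>UNIV. pm G $ j * (PhiT \<eta> \<alpha> (G + (gg$j / pm G $ j) *\<^sub>R axis j 1) - PhiT \<eta> \<alpha> G - gg$j))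
          \<le> real CARD('n) powr \<alpha> / (2 * \<eta> * \<alpha>)"
proof -
  have each: "pm G $ j * (PhiT \<eta> \<alpha> (G + (gg$j / pm G $ j) *\<^sub>R axis j 1) - PhiT \<eta> \<alpha> G - gg$j)
      \<le> (pm G $ j) powr (1 - \<alpha>) / (2 * \<eta> * \<alpha>)" for j
  proof -
    define p where "p = pm G $ j"
    define u where "u = - gg$j / p"
    have p: "p > 0" unfolding p_def by (rule pm_pos)
    have u: "0 \<le> u" unfolding u_def using gg[of j] p by (simp add: divide_nonpos_pos)
    have e1: "G + (gg$j / p) *\<^sub>R axis j 1 = G - u *\<^sub>R axis j 1" unfolding u_def by simp
    have e2: "- gg$j = u * p" unfolding u_def using p by simp
    have D: "PhiT \<eta> \<alpha> (G - u *\<^sub>R axis j 1) - PhiT \<eta> \<alpha> G + u * p \<le> p powr (2 - \<alpha>) / (\<eta> * \<alpha>) * u^2 / 2"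
      using diverg[OF u, of G j] unfolding p_def .
    have "p * (PhiT \<eta> \<alpha> (G + (gg$j / p) *\<^sub>R axis j 1) - PhiT \<eta> \<alpha> G - gg$j)
        \<le> p * (p powr (2 - \<alpha>) / (\<eta> * \<alpha>) * u^2 / 2)"
    proof -
      have "PhiT \<eta> \<alpha> (G + (gg$j / p) *\<^sub>R axis j 1) - PhiT \<eta> \<alpha> G - gg$j \<le> p powr (2 - \<alpha>) / (\<eta> * \<alpha>) * u^2 / 2"
        using D e2 unfolding e1 by linarith
      thus ?thesis using p by (intro mult_left_mono) auto
    qed
    also have "\<dots> = (gg$j)^2 * p powr (1 - \<alpha>) / (2 * \<eta> * \<alpha>)"
    proof -
      have "p powr (2 - \<alpha>) = p powr (1 + (1 - \<alpha>))" by simp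
      also have "\<dots> = p powr 1 * p powr (1 - \<alpha>)" by (rule powr_add)
      finally have "p powr (2 - \<alpha>) = p powr 1 * p powr (1 - \<alpha>)" .
      thus ?thesis unfolding u_def using p by (simp add: field_simps power2_eq_square)
    qed
    also have "\<dots> \<le> 1 * p powr (1 - \<alpha>) / (2 * \<eta> * \<alpha>)"
    proof -
      have "(- gg$j) * (- gg$j) \<le> 1" using gg[of j] by (intro mult_le_one) auto
      hence "(gg$j)^2 \<le> 1" by (simp add: power2_eq_square)
      thus ?thesis using eta a0 by (intro divide_right_mono mult_right_mono) auto
    qed
    finally show ?thesis unfolding p_def by simp
  qed
  have "(\<Sum>j\<in>UNIV. pm G $ j * (PhiT \<eta> \<alpha> (G + (gg$j / pm G $ j) *\<^sub>R axis j 1) - PhiT \<eta> \<alpha> G - gg$j))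
      \<le> (\<Sum>j\<in>UNIV. (pm G $ j) powr (1 - \<alpha>) / (2 * \<eta> * \<alpha>))"
    by (intro sum_mono each)
  also have "\<dots> = (\<Sum>j\<in>UNIV. (pm G $ j) powr (1 - \<alpha>)) / (2 * \<eta> * \<alpha>)"
    by (simp add: sum_divide_distrib)
  also have "\<dots> \<le> real CARD('n) powr (1 - (1 - \<alpha>)) / (2 * \<eta> * \<alpha>)"
    using eta a0 a1 by (intro divide_right_mono sum_powr_le pm_simplex) auto
  finally show ?thesis by simp
qed

lemma Phi0: "PhiT \<eta> \<alpha> (0::real^'n::finite) \<le> \<eta> * (real CARD('n) powr (1 - \<alpha>) - 1) / (1 - \<alpha>)"
proof -
  have "PhiT \<eta> \<alpha> (0::real^'n) = F 0 (pm (0::real^'n))" by (rule Phi_eq)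
  also have "\<dots> = \<eta> / (1 - \<alpha>) * (\<Sum>j\<in>UNIV. (pm (0::real^'n)) $ j powr \<alpha>) - \<eta> / (1 - \<alpha>)"
    unfolding F_expand by (simp add: sum_distrib_left)
  also have "\<dots> \<le> \<eta> / (1 - \<alpha>) * real CARD('n) powr (1 - \<alpha>) - \<eta> / (1 - \<alpha>)"
    using eta a1 a0 by (intro diff_right_mono mult_left_mono sum_powr_le pm_simplex) auto
  finally show ?thesis by (simp add: field_simps diff_divide_distrib)
qed

lemma Phi_ge_comp: "G$i \<le> PhiT \<eta> \<alpha> G"
proof -
  have ax: "axis i 1 \<in> prob_simplex"
    unfolding prob_simplex_def by (auto simp: axis_def)
  have "F G (axis i 1) = G$i"
  proof -
    have "(\<Sum>j\<in>UNIV. axis i (1::real) $ j powr \<alpha>) = (\<Sum>j\<in>UNIV. if j = i then 1 else 0)"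
      by (rule sum.cong) (auto simp: axis_def)
    hence "(\<Sum>j\<in>UNIV. axis i (1::real) $ j powr \<alpha>) = 1" by simp
    thus ?thesis unfolding F_def tsallis_def by (simp add: inner_axis')
  qed
  thus ?thesis using Phi_ge[OF ax, of G] by simp
qed

end




lemma Ghat_dep: "(\<And>s. 1 \<le> s \<Longrightarrow> s \<le> t \<Longrightarrow> h s = h' s) \<Longrightarrow> Ghat Phi g h t = Ghat Phi g h' t"
  by (induction t) auto

lemma Ghat_upd: "Ghat Phi g (h(Suc T := j)) T = Ghat Phi g h T"
  by (rule Ghat_dep) auto

context tsal begin

definition E :: "(nat \<Rightarrow> real^'n::finite) \<Rightarrow> nat \<Rightarrow> ((nat \<Rightarrow> 'n) \<Rightarrow> real) \<Rightarrow> real" where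
  "E g T X = (\<Sum>h\<in>PiE {1..T} (\<lambda>_. UNIV). hist_prob (PhiT \<eta> \<alpha>) g T h * X h)"

lemma pdist_eq: "pdist (PhiT \<eta> \<alpha>) g h t = pm (Ghat (PhiT \<eta> \<alpha>) g h (t - 1))"
  unfolding pdist_def grad_eq ..

lemma Ghat_Suc: "Ghat (PhiT \<eta> \<alpha>) g h (Suc t) = Ghat (PhiT \<eta> \<alpha>) g h t
   + (g (Suc t) $ h (Suc t) / pm (Ghat (PhiT \<eta> \<alpha>) g h t) $ h (Suc t)) *\<^sub>R axis (h (Suc t)) 1"
  by (simp add: grad_eq)

lemma hist_nonneg: "0 \<le> hist_prob (PhiT \<eta> \<alpha>) g T h"
  unfolding hist_prob_def pdist_eq by (intro prod_nonneg) (auto intro: less_imp_le pm_pos)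

lemma hist_Suc:
  assumes "h \<in> PiE {1..T} (\<lambda>_. UNIV)"
  shows "hist_prob (PhiT \<eta> \<alpha>) g (Suc T) (h(Suc T := j))
     = hist_prob (PhiT \<eta> \<alpha>) g T h * pm (Ghat (PhiT \<eta> \<alpha>) g h T) $ j"
proof -
  have "(\<Prod>t=1..T. pdist (PhiT \<eta> \<alpha>) g (h(Suc T := j)) t $ (h(Suc T := j)) t)
      = (\<Prod>t=1..T. pdist (PhiT \<eta> \<alpha>) g h t $ h t)"
  proof (rule prod.cong)
    fix t assume t: "t \<in> {1..T}"
    have "Ghat (PhiT \<eta> \<alpha>) g (h(Suc T := j)) (t - 1) = Ghat (PhiT \<eta> \<alpha>) g h (t - 1)"
      by (rule Ghat_dep) (use t in auto)
    thus "pdist (PhiT \<eta> \<alpha>) g (h(Suc T := j)) t $ (h(Suc T := j)) t = pdist (PhiT \<eta> \<alpha>) g h t $ h t"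
      using t by (simp add: pdist_eq)
  qed simp
  thus ?thesis unfolding hist_prob_def by (simp add: pdist_eq Ghat_upd)
qed

lemma E_Suc:
  "E g (Suc T) X = E g T (\<lambda>h. \<Sum>j\<in>UNIV. pm (Ghat (PhiT \<eta> \<alpha>) g h T) $ j * X (h(Suc T := j)))"
proof -
  have ins: "{1..Suc T} = insert (Suc T) {1..T}" by auto
  have PI: "PiE {1..Suc T} (\<lambda>_. UNIV) = (\<lambda>(y, f). f(Suc T := y)) ` (UNIV \<times> PiE {1..T} (\<lambda>_. UNIV))"
    unfolding ins by (rule PiE_insert_eq)
  have inj: "inj_on (\<lambda>(y, f). f(Suc T := y)) (UNIV \<times> PiE {1..T} (\<lambda>_::nat. UNIV::'a set))"
    by (rule inj_combinator) auto
  have "E g (Suc T) X = (\<Sum>(y, f)\<in>UNIV \<times> PiE {1..T} (\<lambda>_. UNIV).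
        hist_prob (PhiT \<eta> \<alpha>) g (Suc T) (f(Suc T := y)) * X (f(Suc T := y)))"
    unfolding E_def PI by (subst sum.reindex[OF inj]) (simp add: case_prod_beta')
  also have "\<dots> = (\<Sum>y\<in>UNIV. \<Sum>f\<in>PiE {1..T} (\<lambda>_. UNIV).
        hist_prob (PhiT \<eta> \<alpha>) g (Suc T) (f(Suc T := y)) * X (f(Suc T := y)))"
    by (rule sum.cartesian_product[symmetric])
  also have "\<dots> = (\<Sum>f\<in>PiE {1..T} (\<lambda>_. UNIV). \<Sum>y\<in>UNIV.
        hist_prob (PhiT \<eta> \<alpha>) g (Suc T) (f(Suc T := y)) * X (f(Suc T := y)))"
    by (rule sum.swap)
  also have "\<dots> = (\<Sum>f\<in>PiE {1..T} (\<lambda>_. UNIV). hist_prob (PhiT \<eta> \<alpha>) g T f *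
        (\<Sum>y\<in>UNIV. pm (Ghat (PhiT \<eta> \<alpha>) g f T) $ y * X (f(Suc T := y))))"
    by (rule sum.cong) (auto simp: hist_Suc sum_distrib_left mult.assoc)
  finally show ?thesis unfolding E_def .
qed

lemma E_0: "E g 0 X = X (\<lambda>_. undefined)"
  unfolding E_def hist_prob_def by simp

lemma E_mono: "(\<And>h. h \<in> PiE {1..T} (\<lambda>_. UNIV) \<Longrightarrow> X h \<le> Y h) \<Longrightarrow> E g T X \<le> E g T Y"
  unfolding E_def by (intro sum_mono mult_left_mono hist_nonneg) auto

lemma E_add: "E g T (\<lambda>h. X h + Y h) = E g T X + E g T Y"
  unfolding E_def by (simp add: distrib_left sum.distrib)

lemma E_diff: "E g T (\<lambda>h. X h - Y h) = E g T X - E g T Y"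
  unfolding E_def by (simp add: right_diff_distrib sum_subtractf)

lemma E_const: "E g T (\<lambda>_. k) = k"
proof (induction T)
  case 0 thus ?case by (simp add: E_0)
next
  case (Suc T)
  have "E g (Suc T) (\<lambda>_. k) = E g T (\<lambda>h. (\<Sum>j\<in>UNIV. pm (Ghat (PhiT \<eta> \<alpha>) g h T) $ j) * k)"
    unfolding E_Suc by (simp add: sum_distrib_right)
  also have "\<dots> = E g T (\<lambda>_. k)" by (simp add: pm_sum)
  finally show ?case using Suc by simp
qed

lemma unbiased: "E g T (\<lambda>h. Ghat (PhiT \<eta> \<alpha>) g h T $ i) = (\<Sum>t=1..T. g t $ i)"
proof (induction T)
  case 0 thus ?case by (simp add: E_0)
next
  case (Suc T)
  have "E g (Suc T) (\<lambda>h. Ghat (PhiT \<eta> \<alpha>) g h (Suc T) $ i)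
      = E g T (\<lambda>h. \<Sum>j\<in>UNIV. pm (Ghat (PhiT \<eta> \<alpha>) g h T) $ j *
          (Ghat (PhiT \<eta> \<alpha>) g h T $ i + (if j = i then g (Suc T) $ j / pm (Ghat (PhiT \<eta> \<alpha>) g h T) $ j else 0)))"
    unfolding E_Suc by (rule arg_cong[where f="E g T"]) (auto intro!: sum.cong simp: grad_eq Ghat_upd axis_def)
  also have "\<dots> = E g T (\<lambda>h. Ghat (PhiT \<eta> \<alpha>) g h T $ i + g (Suc T) $ i)"
  proof -
    have "(\<Sum>j\<in>UNIV. pm G $ j * (G $ i + (if j = i then g (Suc T) $ j / pm G $ j else 0)))
        = G $ i + g (Suc T) $ i" for G :: "real^'a"
    proof -
      have "(\<Sum>j\<in>UNIV. pm G $ j * (G $ i + (if j = i then g (Suc T) $ j / pm G $ j else 0)))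
          = (\<Sum>j\<in>UNIV. pm G $ j) * G $ i + (\<Sum>j\<in>UNIV. if j = i then g (Suc T) $ j else 0)"
      proof -
        have "pm G $ j * (G $ i + (if j = i then g (Suc T) $ j / pm G $ j else 0))
            = pm G $ j * G $ i + (if j = i then g (Suc T) $ j else 0)" for j
          using pm_pos[of G j] by (auto simp: field_simps)
        hence "(\<Sum>j\<in>UNIV. pm G $ j * (G $ i + (if j = i then g (Suc T) $ j / pm G $ j else 0)))
            = (\<Sum>j\<in>UNIV. pm G $ j * G $ i + (if j = i then g (Suc T) $ j else 0))" by simp
        thus ?thesis by (simp only: sum.distrib sum_distrib_right)
      qed
      thus ?thesis by (simp add: pm_sum)
    qed
    thus ?thesis by simp
  qed
  also have "\<dots> = (\<Sum>t=1..T. g t $ i) + g (Suc T) $ i"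
    by (simp add: E_add E_const Suc)
  finally show ?case by simp
qed

definition Psi where "Psi g h T = PhiT \<eta> \<alpha> (Ghat (PhiT \<eta> \<alpha>) g h T) - (\<Sum>s=1..T. g s $ h s)"

lemma Psi_bound:
  fixes g :: "nat \<Rightarrow> real^'n::finite"
  assumes "\<forall>t\<in>{1..T}. \<forall>i. -1 \<le> g t $ i \<and> g t $ i \<le> 0"
  shows "E g T (\<lambda>h. Psi g h T) \<le> PhiT \<eta> \<alpha> (0::real^'n) + real T * (real CARD('n) powr \<alpha> / (2 * \<eta> * \<alpha>))"
  using assms
proof (induction T)
  case 0 thus ?case by (simp add: E_0 Psi_def)
next
  case (Suc T)
  define B where "B = real CARD('n) powr \<alpha> / (2 * \<eta> * \<alpha>)"
  have IH: "E g T (\<lambda>h. Psi g h T) \<le> PhiT \<eta> \<alpha> (0::real^'n) + real T * B"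
    using Suc unfolding B_def by auto
  have gb: "\<And>j. -1 \<le> g (Suc T) $ j \<and> g (Suc T) $ j \<le> 0" using Suc.prems by auto
  have "E g (Suc T) (\<lambda>h. Psi g h (Suc T))
      = E g T (\<lambda>h. \<Sum>j\<in>UNIV. pm (Ghat (PhiT \<eta> \<alpha>) g h T) $ j * Psi g (h(Suc T := j)) (Suc T))"
    by (rule E_Suc)
  also have "\<dots> \<le> E g T (\<lambda>h. Psi g h T + B)"
  proof (rule E_mono)
    fix h
    define G where "G = Ghat (PhiT \<eta> \<alpha>) g h T"
    have eq: "Psi g (h(Suc T := j)) (Suc T) = Psi g h T +
       (PhiT \<eta> \<alpha> (G + (g (Suc T) $ j / pm G $ j) *\<^sub>R axis j 1) - PhiT \<eta> \<alpha> G - g (Suc T) $ j)" for j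
    proof -
      have "(\<Sum>s=1..T. g s $ (h(Suc T := j)) s) = (\<Sum>s=1..T. g s $ h s)"
        by (rule sum.cong) auto
      thus ?thesis unfolding Psi_def G_def by (simp add: grad_eq Ghat_upd)
    qed
    have "(\<Sum>j\<in>UNIV. pm G $ j * Psi g (h(Suc T := j)) (Suc T))
       = (\<Sum>j\<in>UNIV. pm G $ j) * Psi g h T + (\<Sum>j\<in>UNIV. pm G $ j *
          (PhiT \<eta> \<alpha> (G + (g (Suc T) $ j / pm G $ j) *\<^sub>R axis j 1) - PhiT \<eta> \<alpha> G - g (Suc T) $ j))"
      unfolding eq by (simp add: distrib_left sum.distrib sum_distrib_right)
    also have "\<dots> \<le> Psi g h T + B"
      using step_bound[OF gb, of G] unfolding B_def by (simp add: pm_sum)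
    finally show "(\<Sum>j\<in>UNIV. pm (Ghat (PhiT \<eta> \<alpha>) g h T) $ j * Psi g (h(Suc T := j)) (Suc T)) \<le> Psi g h T + B"
      unfolding G_def .
  qed
  also have "\<dots> = E g T (\<lambda>h. Psi g h T) + B" using E_add[of g T "\<lambda>h. Psi g h T" "\<lambda>_. B"] E_const[of g T B] by simp
  also have "\<dots> \<le> PhiT \<eta> \<alpha> (0::real^'n) + real (Suc T) * B" using IH by (simp add: algebra_simps)
  finally show ?case unfolding B_def .
qed

lemma main:
  fixes g :: "nat \<Rightarrow> real^'n::finite"
  assumes gb: "\<forall>t\<in>{1..T}. \<forall>i. -1 \<le> g t $ i \<and> g t $ i \<le> 0"
  shows "expected_regret (PhiT \<eta> \<alpha>) g T
           \<le> \<eta> * ((real CARD('n)) powr (1 - \<alpha>) - 1) / (1 - \<alpha>)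
             + (real CARD('n)) powr \<alpha> * real T / (2 * \<eta> * \<alpha>)"
proof -
  define A where "A i = (\<Sum>t=1..T. g t $ i)" for i
  define M where "M = Max (range A)"
  define Gh where "Gh h = Ghat (PhiT \<eta> \<alpha>) g h T" for h
  have reg: "regret g T h = M - PhiT \<eta> \<alpha> (Gh h) + Psi g h T" for h
  proof -
    define S where "S = (\<Sum>t=1..T. g t $ h t)"
    have "range (\<lambda>i. \<Sum>t=1..T. g t $ i - g t $ h t) = (\<lambda>x. x - S) ` range A"
      unfolding A_def S_def by (auto simp: sum_subtractf)
    hence "regret g T h = Max ((\<lambda>x. x - S) ` range A)" unfolding regret_def by simp
    also have "\<dots> = M - S" unfolding M_def
      by (rule mono_Max_commute[symmetric]) (auto simp: mono_def)
    finally show ?thesis unfolding Psi_def S_def Gh_def by simp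
  qed
  have "expected_regret (PhiT \<eta> \<alpha>) g T = E g T (regret g T)"
    unfolding expected_regret_def E_def ..
  also have "\<dots> = E g T (\<lambda>h. M - PhiT \<eta> \<alpha> (Gh h) + Psi g h T)" unfolding reg ..
  also have "\<dots> = M - E g T (\<lambda>h. PhiT \<eta> \<alpha> (Gh h)) + E g T (\<lambda>h. Psi g h T)"
    using E_add[of g T "\<lambda>h. M - PhiT \<eta> \<alpha> (Gh h)" "\<lambda>h. Psi g h T"]
      E_diff[of g T "\<lambda>_. M" "\<lambda>h. PhiT \<eta> \<alpha> (Gh h)"] E_const[of g T M] by simp
  also have "\<dots> \<le> E g T (\<lambda>h. Psi g h T)"
  proof -
    have "A i \<le> E g T (\<lambda>h. PhiT \<eta> \<alpha> (Gh h))" for i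
    proof -
      have "A i = E g T (\<lambda>h. Gh h $ i)" unfolding A_def Gh_def by (rule unbiased[symmetric])
      also have "\<dots> \<le> E g T (\<lambda>h. PhiT \<eta> \<alpha> (Gh h))" by (rule E_mono) (rule Phi_ge_comp)
      finally show ?thesis .
    qed
    hence "M \<le> E g T (\<lambda>h. PhiT \<eta> \<alpha> (Gh h))" unfolding M_def by (auto simp: Max_le_iff)
    thus ?thesis by simp
  qed
  also have "\<dots> \<le> PhiT \<eta> \<alpha> (0::real^'n) + real T * (real CARD('n) powr \<alpha> / (2 * \<eta> * \<alpha>))"
    by (rule Psi_bound[OF gb])
  also have "\<dots> \<le> \<eta> * ((real CARD('n)) powr (1 - \<alpha>) - 1) / (1 - \<alpha>)
             + (real CARD('n)) powr \<alpha> * real T / (2 * \<eta> * \<alpha>)"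
    using Phi0[where 'n='n] by (simp add: mult.commute)
  finally show ?thesis .
qed

end


theorem theorem2:
  fixes g :: "nat \<Rightarrow> real ^ 'n::finite"
    and T :: nat and \<alpha> \<eta> :: real
  assumes "CARD('n) \<ge> 2"
    and "T \<ge> 1"
    and "0 < \<alpha>" and "\<alpha> < 1"
    and "\<eta> > 0"
    and "\<forall>t\<in>{1..T}. \<forall>i. -1 \<le> g t $ i \<and> g t $ i \<le> 0"
  shows "expected_regret (PhiT \<eta> \<alpha>) g T
           \<le> \<eta> * ((real CARD('n)) powr (1 - \<alpha>) - 1) / (1 - \<alpha>)
             + (real CARD('n)) powr \<alpha> * real T / (2 * \<eta> * \<alpha>)"
proof -
  interpret tsal \<eta> \<alpha> using assms by unfold_locales auto
  show ?thesis by (rule main) (use assms in auto)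
qed

end
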